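(* Let $\iota$ be a continuous involution of $G$, $H$ a pro-$p$ open compact subgroup of $G$ and $\chi$ a character of $H$. Suppose there is $w\in G$ with $\iota(H)=H^w$ and $\chi^{-1}\circ\iota=\chi^w$. Then for every $g\in G$, the character $\chi^g$ is trivial on $H^g\cap G^\iota$ if and only if $w\,\iota(g)\,g^{-1}$ intertwines $\chi$.
   Context: $F$ is a non-archimedean locally compact field of odd residue characteristic $p$, $A$ a central simple $F$-algebra and $G=A^\times$. $G^\iota$ is the fixed-point subgroup of $\iota$. For $g\in G$: $H^g=g^{-1}Hg$ and $\chi^g(x)=\chi(gxg^{-1})$ for $x\in H^g$. An element $\gamma\in G$ intertwines $\chi$ if $\chi(h)=\chi^\gamma(h)$ for all $h\in H\cap H^\gamma$. *)

theory Defs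
  imports "HOL-Analysis.Analysis"
begin

definition abs_val :: "('f::field \<Rightarrow> real) \<Rightarrow> bool" where
  "abs_val v \<longleftrightarrow> (\<forall>x. v x \<ge> 0) \<and> (\<forall>x. v x = 0 \<longleftrightarrow> x = 0) \<and>
     (\<forall>x y. v (x * y) = v x * v y) \<and> (\<forall>x y. v (x + y) \<le> v x + v y)"

definition F_top :: "('f::field \<Rightarrow> real) \<Rightarrow> 'f topology" where
  "F_top v = Metric_space.mtopology UNIV (\<lambda>x y. v (x - y))"

text \<open>Non-archimedean, non-trivially valued, locally compact field whose residue
  field has characteristic p (i.e. v(p) < 1).\<close>
definition nonarch_local_field :: "('f::field \<Rightarrow> real) \<Rightarrow> nat \<Rightarrow> bool" where
  "nonarch_local_field v p \<longleftrightarrow> abs_val v \<and>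
     (\<forall>x y. v (x + y) \<le> max (v x) (v y)) \<and>
     (\<exists>x. v x \<noteq> 0 \<and> v x \<noteq> 1) \<and>
     locally_compact_space (F_top v) \<and>
     prime p \<and> v (of_nat p) < 1"

text \<open>A is a ring type 'a; the F-algebra structure is given by the ring embedding e : F \<rightarrow> A
  (scalar multiplication c\<cdot>a = e c * a); b 0, ..., b (n-1) is an F-basis of A.\<close>

definition is_basis :: "('f::field \<Rightarrow> 'a::ring_1) \<Rightarrow> nat \<Rightarrow> (nat \<Rightarrow> 'a) \<Rightarrow> bool" where
  "is_basis e n b \<longleftrightarrow>
     (\<forall>a. \<exists>!c::nat \<Rightarrow> 'f. (\<forall>i\<ge>n. c i = 0) \<and> a = (\<Sum>i<n. e (c i) * b i))"

definition two_sided_ideal :: "'a::ring_1 set \<Rightarrow> bool" where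
  "two_sided_ideal I \<longleftrightarrow> 0 \<in> I \<and> (\<forall>x\<in>I. \<forall>y\<in>I. x + y \<in> I) \<and> (\<forall>x\<in>I. - x \<in> I) \<and>
     (\<forall>x\<in>I. \<forall>a. a * x \<in> I \<and> x * a \<in> I)"

definition central_simple_algebra ::
    "('f::field \<Rightarrow> 'a::ring_1) \<Rightarrow> nat \<Rightarrow> (nat \<Rightarrow> 'a) \<Rightarrow> bool" where
  "central_simple_algebra e n b \<longleftrightarrow>
     e 1 = 1 \<and> (\<forall>x y. e (x + y) = e x + e y) \<and> (\<forall>x y. e (x * y) = e x * e y) \<and>
     (\<forall>c a. e c * a = a * e c) \<and>
     (\<forall>a. (\<forall>a'. a * a' = a' * a) \<longrightarrow> a \<in> range e) \<and>
     is_basis e n b \<and>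
     e 1 \<noteq> 0 \<and> (\<forall>I::'a set. two_sided_ideal I \<longrightarrow> I = {0} \<or> I = UNIV)"

text \<open>Coordinates w.r.t. the basis, the sup-norm and the resulting (basis-independent)
  topology of A.\<close>
definition coord :: "('f::field \<Rightarrow> 'a::ring_1) \<Rightarrow> nat \<Rightarrow> (nat \<Rightarrow> 'a) \<Rightarrow> 'a \<Rightarrow> nat \<Rightarrow> 'f" where
  "coord e n b a = (THE c. (\<forall>i\<ge>n. c i = 0) \<and> a = (\<Sum>i<n. e (c i) * b i))"

definition A_norm :: "('f::field \<Rightarrow> real) \<Rightarrow> ('f \<Rightarrow> 'a::ring_1) \<Rightarrow> nat \<Rightarrow> (nat \<Rightarrow> 'a) \<Rightarrow> 'a \<Rightarrow> real" where
  "A_norm v e n b a = Max ((\<lambda>i. v (coord e n b a i)) ` {..<n})"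

definition A_top :: "('f::field \<Rightarrow> real) \<Rightarrow> ('f \<Rightarrow> 'a::ring_1) \<Rightarrow> nat \<Rightarrow> (nat \<Rightarrow> 'a) \<Rightarrow> 'a topology" where
  "A_top v e n b = Metric_space.mtopology UNIV (\<lambda>x y. A_norm v e n b (x - y))"

definition units :: "'a::ring_1 set" where
  "units = {a. \<exists>a'. a * a' = 1 \<and> a' * a = 1}"

definition ginv :: "'a::ring_1 \<Rightarrow> 'a" where
  "ginv a = (THE a'. a * a' = 1 \<and> a' * a = 1)"

definition G_top :: "('f::field \<Rightarrow> real) \<Rightarrow> ('f \<Rightarrow> 'a::ring_1) \<Rightarrow> nat \<Rightarrow> (nat \<Rightarrow> 'a) \<Rightarrow> 'a topology" where
  "G_top v e n b = subtopology (A_top v e n b) units"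

definition subgroup_of_units :: "'a::ring_1 set \<Rightarrow> bool" where
  "subgroup_of_units H \<longleftrightarrow> H \<subseteq> units \<and> 1 \<in> H \<and> (\<forall>x\<in>H. \<forall>y\<in>H. x * y \<in> H) \<and>
     (\<forall>x\<in>H. ginv x \<in> H)"

definition conj_set :: "'a::ring_1 set \<Rightarrow> 'a \<Rightarrow> 'a set" where
  "conj_set H g = (\<lambda>h. ginv g * h * g) ` H"

definition conj_char :: "('a::ring_1 \<Rightarrow> complex) \<Rightarrow> 'a \<Rightarrow> 'a \<Rightarrow> complex" where
  "conj_char chi g x = chi (g * x * ginv g)"

definition fixed_points :: "('a::ring_1 \<Rightarrow> 'a) \<Rightarrow> 'a set" where
  "fixed_points iota = {x \<in> units. iota x = x}"

definition continuous_involution :: "'a::ring_1 topology \<Rightarrow> ('a \<Rightarrow> 'a) \<Rightarrow> bool" where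
  "continuous_involution T iota \<longleftrightarrow>
     (\<forall>x\<in>units. iota x \<in> units) \<and> (\<forall>x\<in>units. \<forall>y\<in>units. iota (x * y) = iota x * iota y) \<and>
     (\<forall>x\<in>units. iota (iota x) = x) \<and> continuous_map T T iota"

text \<open>Pro-p group (compact group, every open normal subgroup of p-power index;
  Hausdorff and total disconnectedness are automatic inside G).\<close>
definition normal_in :: "'a::ring_1 set \<Rightarrow> 'a set \<Rightarrow> bool" where
  "normal_in N H \<longleftrightarrow> subgroup_of_units N \<and> N \<subseteq> H \<and> (\<forall>h\<in>H. \<forall>x\<in>N. h * x * ginv h \<in> N)"

definition pro_p_group :: "'a::ring_1 topology \<Rightarrow> nat \<Rightarrow> 'a set \<Rightarrow> bool" where
  "pro_p_group T p H \<longleftrightarrow> subgroup_of_units H \<and> compactin T H \<and>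
     (\<forall>N. normal_in N H \<and> openin (subtopology T H) N \<longrightarrow>
        (\<exists>k. card ((\<lambda>h. (\<lambda>x. h * x) ` N) ` H) = p ^ k))"

definition character :: "'a::ring_1 topology \<Rightarrow> 'a set \<Rightarrow> ('a \<Rightarrow> complex) \<Rightarrow> bool" where
  "character T H chi \<longleftrightarrow> (\<forall>x\<in>H. chi x \<noteq> 0) \<and> (\<forall>x\<in>H. \<forall>y\<in>H. chi (x * y) = chi x * chi y) \<and>
     continuous_map (subtopology T H) euclidean chi"

definition intertwines :: "'a::ring_1 set \<Rightarrow> ('a \<Rightarrow> complex) \<Rightarrow> 'a \<Rightarrow> bool" where
  "intertwines H chi \<gamma> \<longleftrightarrow> (\<forall>h \<in> H \<inter> conj_set H \<gamma>. chi h = conj_char chi \<gamma> h)"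

end

theory Submission
  imports Defs "HOL-Algebra.Coset" "HOL-Algebra.Multiplicative_Group"
begin

lemma ginv_unique: "(x::'a::ring_1) * y = 1 \<Longrightarrow> y * x = 1 \<Longrightarrow> ginv x = y"
  unfolding ginv_def
proof (rule the_equality)
  fix z assume "x * y = 1" "y * x = 1" "x * z = 1 \<and> z * x = 1"
  then have "z = (y * x) * z" by simp
  also have "\<dots> = y" using \<open>x * z = 1 \<and> z * x = 1\<close> by (simp add: mult.assoc)
  finally show "z = y" .
qed simp

lemma ginv_rl: assumes "x \<in> units" shows "(x::'a::ring_1) * ginv x = 1 \<and> ginv x * x = 1"
proof -
  obtain y where "x * y = 1" "y * x = 1" using assms unfolding units_def by blast
  then show ?thesis using ginv_unique[of x y] by simp
qed
lemma ginv_r: "x \<in> units \<Longrightarrow> (x::'a::ring_1) * ginv x = 1"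
  using ginv_rl by blast
lemma ginv_l: "x \<in> units \<Longrightarrow> ginv (x::'a::ring_1) * x = 1"
  using ginv_rl by blast
lemma ginv_units: "x \<in> units \<Longrightarrow> ginv (x::'a::ring_1) \<in> units"
proof -
  assume "x \<in> units" then have "ginv x * x = 1 \<and> x * ginv x = 1" using ginv_rl by blast
  then show ?thesis unfolding units_def by blast
qed
lemma units_mult: assumes "x \<in> units" "y \<in> units" shows "(x::'a::ring_1) * y \<in> units"
proof -
  have "x * y * (ginv y * ginv x) = x * (y * ginv y) * ginv x" by (simp add: mult.assoc)
  then have 1: "x * y * (ginv y * ginv x) = 1" using assms by (simp add: ginv_r)
  have "ginv y * ginv x * (x * y) = ginv y * (ginv x * x) * y" by (simp add: mult.assoc)
  then have 2: "ginv y * ginv x * (x * y) = 1" using assms by (simp add: ginv_l)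
  show ?thesis unfolding units_def using 1 2 by blast
qed
lemma one_units[simp]: "(1::'a::ring_1) \<in> units"
  unfolding units_def by auto
lemma ginv_one[simp]: "ginv (1::'a::ring_1) = 1"
  by (rule ginv_unique) auto
lemma ginv_ginv: "x \<in> units \<Longrightarrow> ginv (ginv (x::'a::ring_1)) = x"
  by (rule ginv_unique) (auto simp: ginv_r ginv_l)
lemma ginv_mult: assumes "x \<in> units" "y \<in> units" shows "ginv ((x::'a::ring_1) * y) = ginv y * ginv x"
proof (rule ginv_unique)
  have "x * y * (ginv y * ginv x) = x * (y * ginv y) * ginv x" by (simp add: mult.assoc)
  then show "x * y * (ginv y * ginv x) = 1" using assms by (simp add: ginv_r)
  have "ginv y * ginv x * (x * y) = ginv y * (ginv x * x) * y" by (simp add: mult.assoc)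
  then show "ginv y * ginv x * (x * y) = 1" using assms by (simp add: ginv_l)
qed
lemma units_power: "x \<in> units \<Longrightarrow> (x::'a::ring_1) ^ k \<in> units"
  by (induction k) (auto intro: units_mult)
lemma ginv_power: "x \<in> units \<Longrightarrow> ginv ((x::'a::ring_1) ^ k) = ginv x ^ k"
proof (induction k)
  case (Suc k)
  have "ginv (x ^ Suc k) = ginv (x ^ k * x)" by (simp only: power_Suc2)
  also have "\<dots> = ginv x * ginv (x ^ k)" using Suc.prems by (simp add: ginv_mult units_power)
  finally show ?case using Suc by simp
qed simp

definition Hgrp :: "'a::ring_1 set \<Rightarrow> 'a monoid" where
  "Hgrp H = \<lparr>carrier = H, mult = (\<lambda>x y. x * y), one = 1\<rparr>"

lemma Hgrp_group: assumes "subgroup_of_units H" shows "group (Hgrp H)"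
proof (rule groupI)
  show "\<And>x y. x \<in> carrier (Hgrp H) \<Longrightarrow> y \<in> carrier (Hgrp H) \<Longrightarrow> x \<otimes>\<^bsub>Hgrp H\<^esub> y \<in> carrier (Hgrp H)"
    using assms by (simp add: Hgrp_def subgroup_of_units_def)
  show "\<one>\<^bsub>Hgrp H\<^esub> \<in> carrier (Hgrp H)" using assms by (simp add: Hgrp_def subgroup_of_units_def)
  show "\<And>x y z. (x \<otimes>\<^bsub>Hgrp H\<^esub> y) \<otimes>\<^bsub>Hgrp H\<^esub> z = x \<otimes>\<^bsub>Hgrp H\<^esub> (y \<otimes>\<^bsub>Hgrp H\<^esub> z)"
    by (simp add: Hgrp_def mult.assoc)
  show "\<And>x. \<one>\<^bsub>Hgrp H\<^esub> \<otimes>\<^bsub>Hgrp H\<^esub> x = x" by (simp add: Hgrp_def)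
  fix x assume "x \<in> carrier (Hgrp H)"
  then have "x \<in> H" by (simp add: Hgrp_def)
  then have "ginv x \<in> H" "ginv x * x = 1" using assms ginv_l by (auto simp: subgroup_of_units_def)
  then show "\<exists>y\<in>carrier (Hgrp H). y \<otimes>\<^bsub>Hgrp H\<^esub> x = \<one>\<^bsub>Hgrp H\<^esub>" by (auto simp: Hgrp_def)
qed

lemma Hgrp_inv: assumes "subgroup_of_units H" "x \<in> H" shows "inv\<^bsub>Hgrp H\<^esub> x = ginv x"
proof -
  interpret group "Hgrp H" using Hgrp_group assms by blast
  have "ginv x \<in> H" "ginv x * x = 1" using assms ginv_l by (auto simp: subgroup_of_units_def)
  then show ?thesis using assms by (intro inv_equality) (auto simp: Hgrp_def)
qed

lemma Hgrp_pow: "x [^]\<^bsub>Hgrp H\<^esub> (k::nat) = x ^ k"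
  by (induction k) (auto simp: Hgrp_def power_commutes)

lemma ppow_in_normal:
  assumes sH: "subgroup_of_units H" and nN: "normal_in N H"
    and c: "card ((\<lambda>h. (\<lambda>x. h * x) ` N) ` H) = q" and m: "m \<in> H"
  shows "m ^ q \<in> N"
proof -
  interpret G: group "Hgrp H" using Hgrp_group sH by blast
  have sN: "subgroup_of_units N" "N \<subseteq> H" and cl: "\<forall>h\<in>H. \<forall>x\<in>N. h * x * ginv h \<in> N"
    using nN by (auto simp: normal_in_def)
  have "subgroup N (Hgrp H)"
  proof (rule G.subgroupI)
    show "N \<subseteq> carrier (Hgrp H)" using sN by (simp add: Hgrp_def)
    show "N \<noteq> {}" using sN by (auto simp: subgroup_of_units_def)
    fix a b assume a: "a \<in> N" and b: "b \<in> N"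
    show "inv\<^bsub>Hgrp H\<^esub> a \<in> N" using Hgrp_inv[OF sH] a sN by (auto simp: subgroup_of_units_def)
    show "a \<otimes>\<^bsub>Hgrp H\<^esub> b \<in> N" using a b sN by (auto simp: subgroup_of_units_def Hgrp_def)
  qed
  then have nor: "N \<lhd> Hgrp H"
    using G.normal_inv_iff cl Hgrp_inv[OF sH] by (auto simp: Hgrp_def)
  interpret normal N "Hgrp H" by (rule nor)
  interpret F: group "Hgrp H Mod N" by (rule factorgroup_is_group)
  have lc: "\<And>h. h \<in> H \<Longrightarrow> N #>\<^bsub>Hgrp H\<^esub> h = (\<lambda>x. h * x) ` N"
  proof -
    fix h assume "h \<in> H"
    then have "N #>\<^bsub>Hgrp H\<^esub> h = h <#\<^bsub>Hgrp H\<^esub> N" using coset_eq by (simp add: Hgrp_def)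
    also have "\<dots> = (\<lambda>x. h * x) ` N" by (auto simp: l_coset_def Hgrp_def)
    finally show "N #>\<^bsub>Hgrp H\<^esub> h = (\<lambda>x. h * x) ` N" .
  qed
  have "carrier (Hgrp H Mod N) = (\<lambda>h. (\<lambda>x. h * x) ` N) ` H"
    unfolding carrier_FactGroup using lc by (auto simp: Hgrp_def)
  then have ord: "order (Hgrp H Mod N) = q" using c by (simp add: order_def)
  have mc: "N #>\<^bsub>Hgrp H\<^esub> m \<in> carrier (Hgrp H Mod N)"
    using m unfolding carrier_FactGroup by (auto simp: Hgrp_def)
  have "(N #>\<^bsub>Hgrp H\<^esub> m) [^]\<^bsub>Hgrp H Mod N\<^esub> q = N"
    using F.pow_order_eq_1[OF mc] ord by simp
  then have "N #>\<^bsub>Hgrp H\<^esub> (m ^ q) = N"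
    using FactGroup_pow[where a=m and k=q] m Hgrp_pow[where x=m and H=H and k=q] by (simp add: Hgrp_def)
  moreover have "1 * m ^ q \<in> N #>\<^bsub>Hgrp H\<^esub> (m ^ q)"
    using sN unfolding r_coset_def Hgrp_def subgroup_of_units_def by force
  ultimately show ?thesis by simp
qed


locale csa =
  fixes v :: "'f::field \<Rightarrow> real" and e :: "'f \<Rightarrow> 'a::ring_1" and n :: nat and b :: "nat \<Rightarrow> 'a"
  assumes av: "abs_val v" and ultra: "\<And>x y. v (x + y) \<le> max (v x) (v y)"
    and A: "central_simple_algebra e n b"
begin

abbreviation "nrm \<equiv> A_norm v e n b"
abbreviation "co \<equiv> coord e n b"

lemma v_nonneg: "v x \<ge> 0" using av by (simp add: abs_val_def)
lemma v_zero_iff: "v x = 0 \<longleftrightarrow> x = 0" using av by (simp add: abs_val_def)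
lemma v_mult: "v (x * y) = v x * v y" using av by (simp add: abs_val_def)
lemma v0[simp]: "v 0 = 0" using v_zero_iff by simp
lemma v1[simp]: "v 1 = 1"
proof -
  have "v 1 = v 1 * v 1" using v_mult[of 1 1] by simp
  moreover have "v 1 \<noteq> 0" using v_zero_iff by simp
  ultimately show ?thesis by simp
qed
lemma v_neg[simp]: "v (- x) = v x"
proof -
  have "v (-1) * v (-1) = 1" using v_mult[of "-1" "-1"] by simp
  then have "v (-1) = 1" using v_nonneg[of "-1"]
    by (metis abs_of_nonneg abs_square_eq_1 power2_eq_square)
  then show ?thesis using v_mult[of "-1" x] by (metis mult_minus1 mult_1)
qed
lemma v_sum_le: "finite I \<Longrightarrow> (\<And>i. i \<in> I \<Longrightarrow> v (f i) \<le> M) \<Longrightarrow> 0 \<le> M \<Longrightarrow> v (sum f I) \<le> M"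
proof (induction I rule: finite_induct)
  case (insert x F)
  have "v (sum f (insert x F)) = v (f x + sum f F)" using insert by simp
  also have "\<dots> \<le> max (v (f x)) (v (sum f F))" by (rule ultra)
  also have "\<dots> \<le> M" using insert.IH insert.prems insert.hyps by (simp add: max_def)
  finally show ?case .
qed simp

lemma csa_conj: "e 1 = 1 \<and> (\<forall>x y. e (x + y) = e x + e y) \<and> (\<forall>x y. e (x * y) = e x * e y) \<and>
     (\<forall>c a. e c * a = a * e c) \<and> is_basis e n b"
  using A unfolding central_simple_algebra_def by (elim conjE) (intro conjI)
lemma e1: "e 1 = 1" using csa_conj by (elim conjE)
lemma e_add: "e (x + y) = e x + e y" using csa_conj by (elim conjE allE)
lemma e_mult: "e (x * y) = e x * e y" using csa_conj by (elim conjE allE)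
lemma e_comm: "e c * a = a * e c" using csa_conj by (elim conjE allE)
lemma e0[simp]: "e 0 = 0"
proof -
  have "e 0 = e 0 + e 0" using e_add[of 0 0] by simp
  then show ?thesis by simp
qed
lemma e_neg: "e (- x) = - e x"
proof -
  have "e (- x) + e x = 0" using e_add[of "-x" x] by simp
  then show ?thesis by (simp add: eq_neg_iff_add_eq_0)
qed
lemma e_sum: "e (sum f I) = (\<Sum>i\<in>I. e (f i))"
  by (induction I rule: infinite_finite_induct) (auto simp: e_add)

lemma basis: "\<exists>!c::nat \<Rightarrow> 'f. (\<forall>i\<ge>n. c i = 0) \<and> a = (\<Sum>i<n. e (c i) * b i)"
  using csa_conj unfolding is_basis_def by (elim conjE allE)

lemma coord_spec: "(\<forall>i\<ge>n. co a i = 0) \<and> a = (\<Sum>i<n. e (co a i) * b i)"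
  unfolding coord_def by (rule theI'[OF basis])

lemma coord_eq: "(\<forall>i\<ge>n. c i = 0) \<Longrightarrow> a = (\<Sum>i<n. e (c i) * b i) \<Longrightarrow> co a = c"
  unfolding coord_def by (rule the1_equality[OF basis]) auto

lemma coord_zero: "co 0 = (\<lambda>_. 0)"
  by (rule coord_eq) auto

lemma coord_add: "co (x + y) = (\<lambda>i. co x i + co y i)"
proof (rule coord_eq)
  show "\<forall>i\<ge>n. co x i + co y i = 0" using coord_spec by simp
  have "x + y = (\<Sum>i<n. e (co x i) * b i) + (\<Sum>i<n. e (co y i) * b i)"
    using coord_spec[of x] coord_spec[of y] by simp
  also have "\<dots> = (\<Sum>i<n. e (co x i + co y i) * b i)"
    by (simp add: e_add distrib_right sum.distrib)
  finally show "x + y = (\<Sum>i<n. e (co x i + co y i) * b i)" .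
qed

lemma coord_neg: "co (- x) = (\<lambda>i. - co x i)"
proof (rule coord_eq)
  show "\<forall>i\<ge>n. - co x i = 0" using coord_spec by simp
  have "- x = - (\<Sum>i<n. e (co x i) * b i)" using coord_spec[of x] by simp
  also have "\<dots> = (\<Sum>i<n. e (- co x i) * b i)"
    by (simp add: e_neg sum_negf)
  finally show "- x = (\<Sum>i<n. e (- co x i) * b i)" .
qed

lemma n_pos: "n > 0"
proof (rule ccontr)
  assume "\<not> n > 0"
  then have "n = 0" by simp
  then have "(1::'a) = 0" using coord_spec[of 1] by simp
  then show False by simp
qed

lemma nrm_def': "nrm x = Max ((\<lambda>i. v (co x i)) ` {..<n})"
  by (simp add: A_norm_def)

lemma nrm_le_iff: "nrm x \<le> M \<longleftrightarrow> (\<forall>i<n. v (co x i) \<le> M)"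
  unfolding nrm_def' by (subst Max_le_iff) (use n_pos in auto)

lemma coord_le_nrm: "i < n \<Longrightarrow> v (co x i) \<le> nrm x"
  using nrm_le_iff[of x "nrm x"] by simp

lemma nrm_nonneg: "nrm x \<ge> 0"
  using coord_le_nrm[of 0 x] n_pos v_nonneg order_trans by blast

lemma nrm_zero_iff: "nrm x = 0 \<longleftrightarrow> x = 0"
proof
  assume "nrm x = 0"
  then have "\<forall>i<n. co x i = 0" using coord_le_nrm v_nonneg v_zero_iff by (metis order_antisym)
  then show "x = 0" using coord_spec[of x] by simp
next
  assume "x = 0"
  then show "nrm x = 0" using nrm_le_iff[of x 0] nrm_nonneg[of x] by (simp add: coord_zero)
qed

lemma nrm_0[simp]: "nrm 0 = 0" using nrm_zero_iff by simp

lemma nrm_neg: "nrm (- x) = nrm x"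
  by (simp add: nrm_def' coord_neg)

lemma nrm_add: "nrm (x + y) \<le> max (nrm x) (nrm y)"
  unfolding nrm_le_iff coord_add
proof (intro allI impI)
  fix i assume "i < n"
  then show "v (co x i + co y i) \<le> max (nrm x) (nrm y)"
    using ultra[of "co x i" "co y i"] coord_le_nrm[of i x] coord_le_nrm[of i y] by linarith
qed

lemma nrm_diff_comm: "nrm (x - y) = nrm (y - x)"
  using nrm_neg[of "y - x"] by simp

lemma nrm_add_le: "nrm x \<le> r \<Longrightarrow> nrm y \<le> r \<Longrightarrow> nrm (x + y) \<le> r"
  using nrm_add[of x y] by linarith

lemma nrm_diff_le: "nrm x \<le> r \<Longrightarrow> nrm y \<le> r \<Longrightarrow> nrm (x - y) \<le> r"
  using nrm_add_le[of x r "- y"] nrm_neg[of y] by simp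

lemma metric: "Metric_space UNIV (\<lambda>x y. nrm (x - y))"
proof
  fix x y z :: 'a
  show "0 \<le> nrm (x - y)" by (rule nrm_nonneg)
  show "nrm (x - y) = nrm (y - x)" by (rule nrm_diff_comm)
  show "(nrm (x - y) = 0) = (x = y)" by (simp add: nrm_zero_iff)
  have "nrm (x - z) = nrm ((x - y) + (y - z))" by simp
  also have "\<dots> \<le> max (nrm (x - y)) (nrm (y - z))" by (rule nrm_add)
  also have "\<dots> \<le> nrm (x - y) + nrm (y - z)" using nrm_nonneg by simp
  finally show "nrm (x - z) \<le> nrm (x - y) + nrm (y - z)" .
qed

end

context csa begin

definition cst :: real where
  "cst = 1 + (\<Sum>i<n. \<Sum>j<n. \<Sum>k<n. v (co (b i * b j) k))"

lemma term_eq: "(e p * b i) * (e q * b j) = (\<Sum>k<n. e (p * q * co (b i * b j) k) * b k)"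
proof -
  have "(e p * b i) * (e q * b j) = e (p * q) * (b i * b j)"
    by (metis e_comm e_mult mult.assoc)
  also have "\<dots> = e (p * q) * (\<Sum>k<n. e (co (b i * b j) k) * b k)"
    using coord_spec[of "b i * b j"] by metis
  also have "\<dots> = (\<Sum>k<n. e (p * q * co (b i * b j) k) * b k)"
    by (simp add: sum_distrib_left e_mult mult.assoc)
  finally show ?thesis .
qed

lemma coord_mult: "co (x * y) = (\<lambda>k. if k < n then \<Sum>i<n. \<Sum>j<n. co x i * co y j * co (b i * b j) k else 0)"
proof (rule coord_eq)
  show "\<forall>i\<ge>n. (if i < n then \<Sum>i'<n. \<Sum>j<n. co x i' * co y j * co (b i' * b j) i else 0) = 0" by simp
  have "x * y = (\<Sum>i<n. e (co x i) * b i) * (\<Sum>j<n. e (co y j) * b j)"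
  proof -
    have hx: "x = (\<Sum>i<n. e (co x i) * b i)" using coord_spec[of x] by (rule conjunct2)
    have hy: "y = (\<Sum>j<n. e (co y j) * b j)" using coord_spec[of y] by (rule conjunct2)
    show ?thesis by (rule arg_cong2[where f="(*)", OF hx hy])
  qed
  also have "\<dots> = (\<Sum>i<n. \<Sum>j<n. (e (co x i) * b i) * (e (co y j) * b j))"
    by (rule sum_product)
  also have "\<dots> = (\<Sum>i<n. \<Sum>j<n. \<Sum>k<n. e (co x i * co y j * co (b i * b j) k) * b k)"
    by (intro sum.cong refl term_eq)
  also have "\<dots> = (\<Sum>i<n. \<Sum>k<n. \<Sum>j<n. e (co x i * co y j * co (b i * b j) k) * b k)"
    by (rule sum.cong[OF refl], rule sum.swap)
  also have "\<dots> = (\<Sum>k<n. \<Sum>i<n. \<Sum>j<n. e (co x i * co y j * co (b i * b j) k) * b k)"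
    by (rule sum.swap)
  also have "\<dots> = (\<Sum>k<n. e (\<Sum>i<n. \<Sum>j<n. co x i * co y j * co (b i * b j) k) * b k)"
    by (simp only: e_sum sum_distrib_right)
  also have "\<dots> = (\<Sum>k<n. e (if k < n then \<Sum>i<n. \<Sum>j<n. co x i * co y j * co (b i * b j) k else 0) * b k)"
    by (rule sum.cong) auto
  finally show "x * y = (\<Sum>k<n. e (if k < n then \<Sum>i<n. \<Sum>j<n. co x i * co y j * co (b i * b j) k else 0) * b k)" .
qed

lemma cst_ge: "i < n \<Longrightarrow> j < n \<Longrightarrow> k < n \<Longrightarrow> v (co (b i * b j) k) \<le> cst"
proof -
  assume ijk: "i < n" "j < n" "k < n"
  have "v (co (b i * b j) k) \<le> (\<Sum>k<n. v (co (b i * b j) k))"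
    using ijk by (intro member_le_sum) (auto simp: v_nonneg)
  also have "\<dots> \<le> (\<Sum>j<n. \<Sum>k<n. v (co (b i * b j) k))"
    using ijk by (intro member_le_sum[where f="\<lambda>j. \<Sum>k<n. v (co (b i * b j) k)"]) (auto simp: v_nonneg sum_nonneg)
  also have "\<dots> \<le> (\<Sum>i<n. \<Sum>j<n. \<Sum>k<n. v (co (b i * b j) k))"
    using ijk by (intro member_le_sum[where f="\<lambda>i. \<Sum>j<n. \<Sum>k<n. v (co (b i * b j) k)"]) (auto simp: v_nonneg sum_nonneg)
  finally show ?thesis unfolding cst_def by simp
qed

lemma cst_pos: "cst > 0"
proof -
  have "0 \<le> (\<Sum>i<n. \<Sum>j<n. \<Sum>k<n. v (co (b i * b j) k))" by (auto intro!: sum_nonneg simp: v_nonneg)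
  then show ?thesis unfolding cst_def by simp
qed

lemma nrm_mult: "nrm (x * y) \<le> cst * nrm x * nrm y"
  unfolding nrm_le_iff
proof (intro allI impI)
  fix k assume k: "k < n"
  have M: "0 \<le> cst * nrm x * nrm y" using cst_pos nrm_nonneg by simp
  have "v (\<Sum>i<n. \<Sum>j<n. co x i * co y j * co (b i * b j) k) \<le> cst * nrm x * nrm y"
  proof (rule v_sum_le[OF _ _ M])
    fix i assume i: "i \<in> {..<n}"
    show "v (\<Sum>j<n. co x i * co y j * co (b i * b j) k) \<le> cst * nrm x * nrm y"
    proof (rule v_sum_le[OF _ _ M])
      fix j assume j: "j \<in> {..<n}"
      have "v (co x i * co y j * co (b i * b j) k) = v (co x i) * v (co y j) * v (co (b i * b j) k)"
        by (simp add: v_mult)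
      also have "\<dots> \<le> nrm x * nrm y * cst"
        using i j k coord_le_nrm[of i x] coord_le_nrm[of j y] cst_ge[of i j k]
        by (intro mult_mono) (auto simp: v_nonneg nrm_nonneg)
      finally show "v (co x i * co y j * co (b i * b j) k) \<le> cst * nrm x * nrm y"
        by (simp add: mult_ac)
    qed simp
  qed simp
  then show "v (co (x * y) k) \<le> cst * nrm x * nrm y" using k by (subst coord_mult[of x y]) simp
qed

end

locale setting = csa v e n b for v :: "'f::field \<Rightarrow> real" and e :: "'f \<Rightarrow> 'a::ring_1" and n b +
  fixes p :: nat and iota :: "'a \<Rightarrow> 'a" and H :: "'a set"
  assumes podd: "odd p"
    and inv: "continuous_involution (G_top v e n b) iota"
    and Hprop: "pro_p_group (G_top v e n b) p H"
begin

abbreviation "dd \<equiv> (\<lambda>x y. nrm (x - y))"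

sublocale Mt: Metric_space UNIV dd by (rule metric)

lemma AT_eq: "A_top v e n b = Mt.mtopology" by (simp add: A_top_def)
lemma GT_eq: "G_top v e n b = subtopology Mt.mtopology units" by (simp add: G_top_def AT_eq)

lemma iota_units: "x \<in> units \<Longrightarrow> iota x \<in> units"
  using inv unfolding continuous_involution_def by blast
lemma iota_mult: "x \<in> units \<Longrightarrow> y \<in> units \<Longrightarrow> iota (x * y) = iota x * iota y"
  using inv unfolding continuous_involution_def by blast
lemma iota_iota: "x \<in> units \<Longrightarrow> iota (iota x) = x"
  using inv unfolding continuous_involution_def by blast
lemma iota_cont: "continuous_map (G_top v e n b) (G_top v e n b) iota"
  using inv unfolding continuous_involution_def by blast

lemma iota_one: "iota 1 = 1"
proof -
  have u: "iota 1 \<in> units" using iota_units by simp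
  have "iota 1 = iota 1 * iota 1" using iota_mult[of 1 1] by simp
  then have "ginv (iota 1) * iota 1 = ginv (iota 1) * (iota 1 * iota 1)" by simp
  then show ?thesis using u by (simp add: ginv_l mult.assoc[symmetric])
qed

lemma iota_ginv: "x \<in> units \<Longrightarrow> iota (ginv x) = ginv (iota x)"
proof -
  assume x: "x \<in> units"
  have "iota x * iota (ginv x) = 1" using iota_mult[of x "ginv x"] x by (simp add: ginv_r ginv_units iota_one)
  moreover have "iota (ginv x) * iota x = 1" using iota_mult[of "ginv x" x] x by (simp add: ginv_l ginv_units iota_one)
  ultimately show ?thesis using ginv_unique by metis
qed

lemma iota_pow: "x \<in> units \<Longrightarrow> iota (x ^ j) = iota x ^ j"
  by (induction j) (auto simp: iota_one iota_mult units_power)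

lemma Hsub: "subgroup_of_units H" using Hprop by (simp add: pro_p_group_def)
lemma H_units: "H \<subseteq> units" using Hsub by (simp add: subgroup_of_units_def)
lemma H_one: "1 \<in> H" using Hsub by (simp add: subgroup_of_units_def)
lemma H_mult: "x \<in> H \<Longrightarrow> y \<in> H \<Longrightarrow> x * y \<in> H" using Hsub by (simp add: subgroup_of_units_def)
lemma H_ginv: "x \<in> H \<Longrightarrow> ginv x \<in> H" using Hsub by (simp add: subgroup_of_units_def)
lemma H_pow: "x \<in> H \<Longrightarrow> x ^ j \<in> H" by (induction j) (auto simp: H_one H_mult)

lemma H_compact: "compactin Mt.mtopology H"
  using Hprop by (simp add: pro_p_group_def GT_eq compactin_subtopology)

lemma H_bounded: "\<exists>B>0. \<forall>x\<in>H. nrm x \<le> B"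
proof -
  have "Mt.mbounded H" using Mt.compactin_imp_mbounded H_compact by blast
  then obtain c B where cB: "H \<subseteq> Mt.mcball c B" unfolding Mt.mbounded_def by blast
  have "\<forall>x\<in>H. nrm x \<le> max 1 (max B (nrm c))"
  proof
    fix x assume "x \<in> H"
    then have "nrm (c - x) \<le> B" using cB by (auto simp: Mt.mcball_def)
    then have "nrm (x - c) \<le> B" by (simp add: nrm_diff_comm)
    moreover have "x = (x - c) + c" by simp
    ultimately have "nrm x \<le> max (nrm (x - c)) (nrm c)" using nrm_add[of "x - c" c] by simp
    then show "nrm x \<le> max 1 (max B (nrm c))" using \<open>nrm (x - c) \<le> B\<close> by linarith
  qed
  then show ?thesis by (intro exI[of _ "max 1 (max B (nrm c))"]) auto
qed

definition BB where "BB = (SOME B. B > 0 \<and> (\<forall>x\<in>H. nrm x \<le> B))"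
lemma BB: "BB > 0" "x \<in> H \<Longrightarrow> nrm x \<le> BB"
  using someI_ex[OF H_bounded[unfolded Bex_def]] unfolding BB_def by auto

lemma nrm_mult3: "nrm (x * y * z) \<le> cst * cst * nrm x * nrm y * nrm z"
proof -
  have "nrm (x * y * z) \<le> cst * nrm (x * y) * nrm z" by (rule nrm_mult)
  also have "\<dots> \<le> cst * (cst * nrm x * nrm y) * nrm z"
    using nrm_mult[of x y] cst_pos nrm_nonneg[of z] by (intro mult_right_mono mult_left_mono) auto
  finally show ?thesis by (simp add: mult_ac)
qed

lemma mono3: "0 \<le> x \<Longrightarrow> x \<le> X \<Longrightarrow> 0 \<le> y \<Longrightarrow> y \<le> Y \<Longrightarrow> 0 \<le> (c::real) \<Longrightarrow> c * x * y \<le> c * X * Y"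
proof -
  assume a: "0 \<le> x" "x \<le> X" "0 \<le> y" "y \<le> Y" "0 \<le> c"
  have "c * x \<le> c * X" using a by (intro mult_left_mono)
  moreover have "0 \<le> c * X" using a by simp
  ultimately show ?thesis using a by (intro mult_mono) auto
qed

lemma nrm_mult_le: "nrm x \<le> X \<Longrightarrow> nrm y \<le> Y \<Longrightarrow> nrm (x * y) \<le> cst * X * Y"
proof -
  assume a: "nrm x \<le> X" "nrm y \<le> Y"
  have "cst * nrm x * nrm y \<le> cst * X * Y"
    using a nrm_nonneg[of x] nrm_nonneg[of y] cst_pos by (intro mono3) auto
  then show ?thesis using nrm_mult[of x y] by linarith
qed

lemma ball_mult:
  assumes "nrm (a - 1) \<le> r" "nrm (c - 1) \<le> r" "cst * r \<le> 1" "0 \<le> r"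
  shows "nrm (a * c - 1) \<le> r"
proof -
  have eq: "a * c - 1 = (a - 1) * (c - 1) + ((a - 1) + (c - 1))" by (simp add: algebra_simps)
  have "nrm ((a - 1) * (c - 1)) \<le> cst * r * r"
    using nrm_mult_le assms by blast
  also have "\<dots> \<le> 1 * r" using assms by (intro mult_right_mono) auto
  finally have 1: "nrm ((a - 1) * (c - 1)) \<le> r" by simp
  show ?thesis unfolding eq using 1 assms by (intro nrm_add_le) auto
qed

lemma ball_inv:
  assumes x: "x \<in> units" and "nrm (x - 1) \<le> r" "nrm (ginv x) \<le> B" "cst * r \<le> 1" "B * cst * cst * r \<le> 1"
    "0 \<le> r" "0 \<le> B"
  shows "nrm (ginv x - 1) \<le> r"
proof -
  have gx: "ginv x * x = 1" using x ginv_l by blast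
  have "ginv x * ((1 - x) * (1 - x)) = ginv x - ginv x * x - ginv x * x + ginv x * x * x"
    by (simp add: algebra_simps)
  also have "\<dots> = ginv x - 2 + x" using gx by simp
  finally have eq0: "ginv x * ((1 - x) * (1 - x)) = ginv x - 2 + x" .
  have eq: "ginv x - 1 = (1 - x) + ginv x * ((1 - x) * (1 - x))"
    by (simp add: eq0)
  have n1: "nrm (1 - x) \<le> r" using assms by (simp add: nrm_diff_comm)
  have "nrm ((1 - x) * (1 - x)) \<le> cst * r * r"
    using nrm_mult_le n1 by blast
  then have "nrm (ginv x * ((1 - x) * (1 - x))) \<le> cst * B * (cst * r * r)"
    using nrm_mult_le assms by blast
  also have "\<dots> = (B * cst * cst * r) * r" by (simp add: mult_ac)
  also have "\<dots> \<le> 1 * r" using assms by (intro mult_right_mono) auto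
  finally show ?thesis unfolding eq using n1 by (intro nrm_add_le) auto
qed

end

context setting begin

definition NN :: "real \<Rightarrow> 'a set" where
  "NN r = {x \<in> H. \<forall>h\<in>H. nrm (h * x * ginv h - 1) \<le> r}"

lemma conj_mult: "h \<in> units \<Longrightarrow> h * (x * y) * ginv h = (h * x * ginv h) * (h * y * ginv h)"
proof -
  assume h: "h \<in> units"
  have "(h * x * ginv h) * (h * y * ginv h) = h * x * (ginv h * h) * y * ginv h" by (simp add: mult.assoc)
  then show ?thesis using h by (simp add: ginv_l mult.assoc)
qed

lemma conj_ginv: "h \<in> units \<Longrightarrow> x \<in> units \<Longrightarrow> h * ginv x * ginv h = ginv (h * x * ginv h)"
  by (simp add: ginv_mult units_mult ginv_units ginv_ginv mult.assoc)

lemma conj_conj: "h \<in> units \<Longrightarrow> k \<in> units \<Longrightarrow> h * (k * x * ginv k) * ginv h = (h * k) * x * ginv (h * k)"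
  by (simp add: ginv_mult mult.assoc)

lemma conj_in_H: "h \<in> H \<Longrightarrow> x \<in> H \<Longrightarrow> h * x * ginv h \<in> H"
  by (simp add: H_mult H_ginv)

context
  fixes r :: real
  assumes r: "0 < r" "cst * r \<le> 1" "BB * cst * cst * r \<le> 1"
begin

lemma NN_sub: "NN r \<subseteq> H" by (auto simp: NN_def)

lemma NN_small: "x \<in> NN r \<Longrightarrow> nrm (x - 1) \<le> r"
  unfolding NN_def using H_one by force

lemma NN_normal: "normal_in (NN r) H"
proof -
  have one: "1 \<in> NN r"
    unfolding NN_def using H_one H_units by (auto simp: ginv_r subset_iff less_imp_le[OF r(1)])
  have mult: "x * y \<in> NN r" if x: "x \<in> NN r" and y: "y \<in> NN r" for x y
  proof -
    have "nrm (h * (x * y) * ginv h - 1) \<le> r" if h: "h \<in> H" for h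
    proof -
      have hu: "h \<in> units" using h H_units by auto
      show ?thesis unfolding conj_mult[OF hu]
        using x y h r by (rule_tac ball_mult) (auto simp: NN_def)
    qed
    then show ?thesis using x y by (auto simp: NN_def H_mult)
  qed
  have ginv: "ginv x \<in> NN r" if x: "x \<in> NN r" for x
  proof -
    have xH: "x \<in> H" using x by (auto simp: NN_def)
    have "nrm (h * ginv x * ginv h - 1) \<le> r" if h: "h \<in> H" for h
    proof -
      have hu: "h \<in> units" and xu: "x \<in> units" using h xH H_units by auto
      have c: "h * x * ginv h \<in> H" using conj_in_H h xH by blast
      show ?thesis unfolding conj_ginv[OF hu xu]
      proof (rule ball_inv[where B=BB])
        show "h * x * ginv h \<in> units" using c H_units by auto
        show "nrm (h * x * ginv h - 1) \<le> r" using x h by (auto simp: NN_def)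
        show "nrm (ginv (h * x * ginv h)) \<le> BB" using BB(2) H_ginv c by blast
      qed (use r BB(1) in auto)
    qed
    then show ?thesis using xH by (auto simp: NN_def H_ginv)
  qed
  have sub: "subgroup_of_units (NN r)"
    unfolding subgroup_of_units_def using one mult ginv NN_sub H_units by blast
  have nor: "h * x * ginv h \<in> NN r" if h: "h \<in> H" and x: "x \<in> NN r" for h x
  proof -
    have xH: "x \<in> H" using x by (auto simp: NN_def)
    have "nrm (h' * (h * x * ginv h) * ginv h' - 1) \<le> r" if h': "h' \<in> H" for h'
    proof -
      have "h' * (h * x * ginv h) * ginv h' = (h' * h) * x * ginv (h' * h)"
        using h h' H_units by (intro conj_conj) auto
      then show ?thesis using x H_mult[OF h' h] by (auto simp: NN_def)
    qed
    then show ?thesis using conj_in_H[OF h xH] by (auto simp: NN_def)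
  qed
  show ?thesis unfolding normal_in_def using sub NN_sub nor by blast
qed

definition delta where "delta = r / (cst * cst * BB * BB)"

lemma delta_pos: "delta > 0" unfolding delta_def using r cst_pos BB by simp

lemma NN_near: assumes x: "x \<in> NN r" and y: "y \<in> H" and d: "nrm (x - y) < delta"
  shows "y \<in> NN r"
proof -
  have "nrm (h * y * ginv h - 1) \<le> r" if h: "h \<in> H" for h
  proof -
    have eq: "h * y * ginv h - 1 = h * (y - x) * ginv h + (h * x * ginv h - 1)"
      by (simp add: algebra_simps)
    have "nrm (h * (y - x) * ginv h) \<le> cst * cst * nrm h * nrm (y - x) * nrm (ginv h)"
      by (rule nrm_mult3)
    also have "\<dots> \<le> cst * cst * BB * delta * BB"
    proof -
      have "nrm (y - x) \<le> delta" using d by (simp add: nrm_diff_comm)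
      moreover have "nrm h \<le> BB" "nrm (ginv h) \<le> BB" using h BB(2) H_ginv by auto
      ultimately show ?thesis using cst_pos delta_pos BB(1) nrm_nonneg[of h] nrm_nonneg[of "y - x"] nrm_nonneg[of "ginv h"]
        by (intro mult_mono mult_left_mono) (auto intro: mult_nonneg_nonneg)
    qed
    also have "\<dots> = r" unfolding delta_def using cst_pos BB(1) by (simp add: field_simps)
    finally show ?thesis unfolding eq using x h by (intro nrm_add_le) (auto simp: NN_def)
  qed
  then show ?thesis using y by (auto simp: NN_def)
qed

lemma NN_open: "openin (subtopology (G_top v e n b) H) (NN r)"
proof -
  have top: "subtopology (G_top v e n b) H = subtopology Mt.mtopology H"
    using H_units by (simp add: GT_eq subtopology_subtopology Int_absorb1)
  let ?U = "\<Union>x\<in>NN r. Mt.mball x delta"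
  have "openin Mt.mtopology ?U" by blast
  moreover have "NN r = ?U \<inter> H"
  proof
    show "NN r \<subseteq> ?U \<inter> H" using NN_sub delta_pos by auto
    show "?U \<inter> H \<subseteq> NN r" using NN_near by (auto simp: Mt.mball_def)
  qed
  ultimately show ?thesis unfolding top openin_subtopology by blast
qed

lemma NN_pow: "x \<in> NN r \<Longrightarrow> x ^ j \<in> NN r"
  using NN_normal unfolding normal_in_def subgroup_of_units_def
  by (induction j) auto

end

lemma pow_conv: assumes m: "m \<in> H" and eps: "\<epsilon> > 0"
  shows "\<exists>k. \<forall>j\<ge>k. nrm (m ^ (p ^ j) - 1) \<le> \<epsilon>"
proof -
  define r where "r = min \<epsilon> (min (1 / cst) (1 / (BB * cst * cst)))"
  have r0: "0 < r" using eps cst_pos BB(1) by (simp add: r_def)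
  have r1: "cst * r \<le> 1"
  proof -
    have "r \<le> 1 / cst" by (simp add: r_def)
    then show ?thesis using cst_pos by (simp add: field_simps)
  qed
  have r2: "BB * cst * cst * r \<le> 1"
  proof -
    have "r \<le> 1 / (BB * cst * cst)" by (simp add: r_def)
    then show ?thesis using cst_pos BB(1) by (simp add: field_simps)
  qed
  note R = r0 r1 r2
  have "normal_in (NN r) H" using NN_normal[OF R] .
  moreover have "openin (subtopology (G_top v e n b) H) (NN r)" using NN_open[OF R] .
  ultimately obtain k where k: "card ((\<lambda>h. (\<lambda>x. h * x) ` NN r) ` H) = p ^ k"
    using Hprop unfolding pro_p_group_def by blast
  have mk: "m ^ (p ^ k) \<in> NN r" using ppow_in_normal[OF Hsub NN_normal[OF R] k m] .
  have "nrm (m ^ (p ^ j) - 1) \<le> \<epsilon>" if j: "j \<ge> k" for j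
  proof -
    have "p ^ j = p ^ k * p ^ (j - k)" using j by (simp add: power_add[symmetric])
    then have "m ^ (p ^ j) = (m ^ (p ^ k)) ^ (p ^ (j - k))" by (simp add: power_mult)
    then have "m ^ (p ^ j) \<in> NN r" using NN_pow[OF R mk] by simp
    then have "nrm (m ^ (p ^ j) - 1) \<le> r" using NN_small[OF R] by blast
    then show ?thesis by (simp add: r_def)
  qed
  then show ?thesis by blast
qed

end

context setting begin

definition conv :: "(nat \<Rightarrow> 'a) \<Rightarrow> 'a \<Rightarrow> bool" where
  "conv f t \<longleftrightarrow> (\<forall>\<epsilon>>0. \<exists>L. \<forall>l\<ge>L. nrm (f l - t) < \<epsilon>)"

lemma conv_limitin: "conv f t \<longleftrightarrow> limitin Mt.mtopology f t sequentially"
  unfolding conv_def Mt.limit_metric_sequentially by simp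

lemma conv_lin: assumes "conv f t" "\<And>l. nrm (f' l - t') \<le> C * nrm (f l - t)" "C \<ge> 0"
  shows "conv f' t'"
  unfolding conv_def
proof (intro allI impI)
  fix \<epsilon> :: real assume eps: "\<epsilon> > 0"
  then have "\<epsilon> / (C + 1) > 0" using assms(3) by simp
  then obtain L where L: "\<forall>l\<ge>L. nrm (f l - t) < \<epsilon> / (C + 1)" using assms(1) unfolding conv_def by blast
  have "nrm (f' l - t') < \<epsilon>" if l: "l \<ge> L" for l
  proof -
    have "nrm (f' l - t') \<le> C * nrm (f l - t)" by (rule assms(2))
    also have "\<dots> \<le> C * (\<epsilon> / (C + 1))" using L l assms(3) by (intro mult_left_mono) auto
    also have "\<dots> < \<epsilon>" using eps assms(3) by (simp add: field_simps)
    finally show ?thesis .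
  qed
  then show "\<exists>L. \<forall>l\<ge>L. nrm (f' l - t') < \<epsilon>" by blast
qed

lemma conv_unique: assumes "conv f t1" "conv f t2" shows "t1 = t2"
proof -
  have "limitin Mt.mtopology f t1 sequentially" "limitin Mt.mtopology f t2 sequentially"
    using assms conv_limitin by auto
  then show ?thesis using Mt.limitin_metric_unique[OF _ _ sequentially_bot] by blast
qed

lemma conv_iota: assumes c: "conv f t" and fu: "\<And>l. f l \<in> units" and tu: "t \<in> units"
  shows "conv (\<lambda>l. iota (f l)) (iota t)"
proof -
  have "limitin Mt.mtopology f t sequentially" using c conv_limitin by auto
  then have "limitin (G_top v e n b) f t sequentially"
    unfolding GT_eq limitin_subtopology using fu tu by auto
  then have "limitin (G_top v e n b) (iota \<circ> f) (iota t) sequentially"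
    by (rule continuous_map_limit[OF iota_cont])
  then have "limitin Mt.mtopology (iota \<circ> f) (iota t) sequentially"
    unfolding GT_eq limitin_subtopology by auto
  then show ?thesis using conv_limitin by (simp add: o_def)
qed

definition ee :: "nat \<Rightarrow> nat" where "ee j = (p ^ j + 1) div 2"

lemma ee2: "2 * ee j = p ^ j + 1"
proof -
  have "odd (p ^ j)" using podd by simp
  then show ?thesis unfolding ee_def by presburger
qed

lemma root_H: assumes m: "m \<in> H"
  shows "\<exists>u\<in>H. u * u = m \<and> (\<exists>r. strict_mono r \<and> conv (\<lambda>l. m ^ ee (r l)) u)"
proof -
  define \<sigma> where "\<sigma> l = m ^ ee l" for l
  have "range \<sigma> \<subseteq> H" using H_pow m by (auto simp: \<sigma>_def)
  then obtain u r where u: "u \<in> H" and r: "strict_mono r"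
    and lim: "limitin Mt.mtopology (\<sigma> \<circ> r) u sequentially"
    using H_compact unfolding Mt.compactin_sequentially by blast
  have cv: "conv (\<lambda>l. m ^ ee (r l)) u" using lim conv_limitin by (simp add: o_def \<sigma>_def)
  have small: "nrm (u * u - m) \<le> \<epsilon>" if eps: "\<epsilon> > 0" for \<epsilon>
  proof -
    define \<eta> where "\<eta> = \<epsilon> / (cst * BB)"
    have eta: "\<eta> > 0" using eps cst_pos BB(1) by (simp add: \<eta>_def)
    obtain L1 where L1: "\<forall>l\<ge>L1. nrm (m ^ ee (r l) - u) < \<eta>" using cv eta unfolding conv_def by blast
    obtain K where K: "\<forall>j\<ge>K. nrm (m ^ (p ^ j) - 1) \<le> \<eta>" using pow_conv[OF m eta] by blast
    define l where "l = max L1 K"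
    define j where "j = r l"
    have jK: "j \<ge> K" using seq_suble[OF r, of l] by (simp add: j_def l_def)
    define s where "s = m ^ ee j"
    have s_near: "nrm (s - u) \<le> \<eta>" using L1 by (simp add: s_def j_def l_def less_imp_le)
    have sH: "s \<in> H" using H_pow m by (simp add: s_def)
    have ss: "s * s = m ^ (p ^ j) * m"
    proof -
      have "s * s = m ^ (ee j + ee j)" by (simp add: s_def power_add)
      also have "\<dots> = m ^ (p ^ j + 1)" using ee2[of j] by (simp add: mult_2)
      also have "\<dots> = m ^ (p ^ j) * m" by (simp add: power_add power_commutes)
      finally show ?thesis .
    qed
    have eq: "u * u - m = (u - s) * u + s * (u - s) + (m ^ (p ^ j) - 1) * m"
      using ss by (simp add: algebra_simps)
    have "\<epsilon> = cst * \<eta> * BB" using cst_pos BB(1) by (simp add: \<eta>_def)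
    have a: "nrm ((u - s) * u) \<le> \<epsilon>"
      using nrm_mult_le[of "u - s" \<eta> u BB] s_near BB(2)[OF u] \<open>\<epsilon> = cst * \<eta> * BB\<close>
      by (simp add: nrm_diff_comm)
    have b: "nrm (s * (u - s)) \<le> \<epsilon>"
      using nrm_mult_le[of s BB "u - s" \<eta>] s_near BB(2)[OF sH] \<open>\<epsilon> = cst * \<eta> * BB\<close>
      by (simp add: nrm_diff_comm mult_ac)
    have c: "nrm ((m ^ (p ^ j) - 1) * m) \<le> \<epsilon>"
      using nrm_mult_le[of "m ^ (p ^ j) - 1" \<eta> m BB] K jK BB(2)[OF m] \<open>\<epsilon> = cst * \<eta> * BB\<close> by simp
    show ?thesis unfolding eq using a b c by (intro nrm_add_le) auto
  qed
  have "u * u = m"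
  proof (rule ccontr)
    assume "u * u \<noteq> m"
    then have "nrm (u * u - m) > 0" using nrm_nonneg nrm_zero_iff by (metis less_eq_real_def eq_iff_diff_eq_0)
    then show False using small[of "nrm (u * u - m) / 2"] by simp
  qed
  then show ?thesis using u r cv by blast
qed

lemma conj_pow: "g \<in> units \<Longrightarrow> (ginv g * m * g) ^ j = ginv g * m ^ j * g"
proof (induction j)
  case 0 then show ?case by (simp add: ginv_l)
next
  case (Suc j)
  have "(ginv g * m * g) ^ Suc j = (ginv g * m * g) * (ginv g * m ^ j * g)" using Suc by simp
  also have "\<dots> = ginv g * m * (g * ginv g) * m ^ j * g" by (simp add: mult.assoc)
  also have "\<dots> = ginv g * m ^ Suc j * g" using Suc.prems by (simp add: ginv_r mult.assoc)
  finally show ?case .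
qed

lemma root_conj: assumes m: "m \<in> H" and g: "g \<in> units"
  shows "\<exists>t\<in>conj_set H g. t * t = ginv g * m * g \<and>
    (iota (ginv g * m * g) = ginv g * m * g \<longrightarrow> iota t = t) \<and>
    (iota (ginv g * m * g) = ginv (ginv g * m * g) \<longrightarrow> iota t = ginv t)"
proof -
  obtain u r where u: "u \<in> H" "u * u = m" and r: "strict_mono r" and cv: "conv (\<lambda>l. m ^ ee (r l)) u"
    using root_H[OF m] by blast
  define k where "k = ginv g * m * g"
  define t where "t = ginv g * u * g"
  have gu: "ginv g \<in> units" using g ginv_units by blast
  have tC: "t \<in> conj_set H g" using u by (simp add: t_def conj_set_def)
  have tu: "t \<in> units" using u H_units g gu by (auto simp: t_def intro!: units_mult)
  have ku: "k \<in> units" using m H_units g gu by (auto simp: k_def intro!: units_mult)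
  have tt: "t * t = k"
  proof -
    have "t * t = ginv g * u * (g * ginv g) * u * g" by (simp add: t_def mult.assoc)
    also have "\<dots> = k" using g u by (simp add: ginv_r k_def mult.assoc)
    finally show ?thesis .
  qed
  define s where "s l = k ^ ee (r l)" for l
  have s_eq: "s l = ginv g * m ^ ee (r l) * g" for l by (simp add: s_def k_def conj_pow[OF g])
  have su: "s l \<in> units" for l using ku by (simp add: s_def units_power)
  define Cg where "Cg = cst * cst * nrm (ginv g) * nrm g"
  have Cg: "Cg \<ge> 0" using cst_pos nrm_nonneg by (simp add: Cg_def)
  have cs: "conv s t"
  proof (rule conv_lin[OF cv _ Cg])
    fix l
    have "s l - t = ginv g * (m ^ ee (r l) - u) * g" by (simp add: s_eq t_def algebra_simps)
    then show "nrm (s l - t) \<le> Cg * nrm (m ^ ee (r l) - u)"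
      using nrm_mult3[of "ginv g" "m ^ ee (r l) - u" g] by (simp add: Cg_def mult_ac)
  qed
  have ci: "conv (\<lambda>l. iota (s l)) (iota t)" using conv_iota[OF cs su tu] .
  have A1: "iota t = t" if fx: "iota k = k"
  proof -
    have "iota (s l) = s l" for l using fx ku by (simp add: s_def iota_pow)
    then show ?thesis using ci cs conv_unique by simp
  qed
  have A2: "iota t = ginv t" if fx: "iota k = ginv k"
  proof -
    have isg: "iota (s l) = ginv (s l)" for l using fx ku by (simp add: s_def iota_pow ginv_power)
    define Cs where "Cs = cst * cst * nrm (ginv g) * BB * nrm g"
    have Cs: "Cs \<ge> 0" using cst_pos nrm_nonneg BB(1) by (simp add: Cs_def)
    have bnd: "nrm (ginv (s l)) \<le> Cs" for l
    proof -
      have mu: "m ^ ee (r l) \<in> units" using m H_units units_power by blast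
      have "ginv (s l) = ginv g * ginv (m ^ ee (r l)) * g"
        using g gu mu by (simp add: s_eq ginv_mult units_mult ginv_ginv mult.assoc)
      moreover have "ginv (m ^ ee (r l)) \<in> H" using H_pow H_ginv m by blast
      ultimately show ?thesis
        using nrm_mult3[of "ginv g" "ginv (m ^ ee (r l))" g] BB(2) cst_pos nrm_nonneg[of "ginv g"] nrm_nonneg[of g]
        unfolding Cs_def
        by (smt (verit, ccfv_SIG) mult_left_mono mult_right_mono mult_nonneg_nonneg)
    qed
    have "conv (\<lambda>l. ginv (s l)) (ginv t)"
    proof (rule conv_lin[OF cs _ ])
      fix l
      have "ginv (s l) - ginv t = ginv (s l) * (t - s l) * ginv t"
        using su[of l] tu by (simp add: algebra_simps ginv_l ginv_r mult.assoc)
      then have "nrm (ginv (s l) - ginv t) \<le> cst * cst * nrm (ginv (s l)) * nrm (t - s l) * nrm (ginv t)"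
        using nrm_mult3 by metis
      also have "\<dots> \<le> cst * cst * Cs * nrm (t - s l) * nrm (ginv t)"
        using bnd[of l] cst_pos nrm_nonneg[of "t - s l"] nrm_nonneg[of "ginv t"]
        by (intro mult_right_mono mult_left_mono) auto
      finally show "nrm (ginv (s l) - ginv t) \<le> (cst * cst * Cs * nrm (ginv t)) * nrm (s l - t)"
        by (simp add: nrm_diff_comm mult_ac)
      show "cst * cst * Cs * nrm (ginv t) \<ge> 0" using Cs cst_pos nrm_nonneg by simp
    qed
    then show ?thesis using ci isg conv_unique by simp
  qed
  show ?thesis using tC tt A1 A2 unfolding k_def by blast
qed

end

lemma cancel1: "x \<in> units \<Longrightarrow> x * (ginv x * y) = (y::'a::ring_1)"
  by (simp add: mult.assoc[symmetric] ginv_r)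
lemma cancel2: "x \<in> units \<Longrightarrow> ginv x * (x * y) = (y::'a::ring_1)"
  by (simp add: mult.assoc[symmetric] ginv_l)

lemmas usimps = mult.assoc cancel1 cancel2 ginv_r ginv_l ginv_mult ginv_ginv ginv_units units_mult

locale full = setting v e n b p iota H for v :: "'f::field \<Rightarrow> real" and e :: "'f \<Rightarrow> 'a::ring_1" and n b p iota H +
  fixes chi :: "'a \<Rightarrow> complex" and w :: 'a
  assumes chi: "character (G_top v e n b) H chi"
    and w: "w \<in> units"
    and iH: "iota ` H = conj_set H w"
    and ichi: "\<forall>x \<in> conj_set H w. inverse (chi (iota x)) = conj_char chi w x"
begin

lemma chi_mult: "x \<in> H \<Longrightarrow> y \<in> H \<Longrightarrow> chi (x * y) = chi x * chi y"
  using chi by (simp add: character_def)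
lemma chi_nz: "x \<in> H \<Longrightarrow> chi x \<noteq> 0"
  using chi by (simp add: character_def)
lemma chi_one: "chi 1 = 1"
proof -
  have "chi 1 = chi 1 * chi 1" using chi_mult[OF H_one H_one] by simp
  then show ?thesis using chi_nz[OF H_one] by simp
qed

lemma conjH: "y \<in> conj_set H g \<longleftrightarrow> (\<exists>h\<in>H. y = ginv g * h * g)"
  by (auto simp: conj_set_def)

lemma conjH_back: "g \<in> units \<Longrightarrow> y \<in> conj_set H g \<Longrightarrow> g * y * ginv g \<in> H"
  using H_units by (auto simp: conj_set_def usimps subset_iff)

lemma conjH_units: "g \<in> units \<Longrightarrow> y \<in> conj_set H g \<Longrightarrow> y \<in> units"
  using H_units by (auto simp: conj_set_def usimps subset_iff)

lemma conjH_in: "g \<in> units \<Longrightarrow> g * y * ginv g \<in> H \<Longrightarrow> y \<in> conj_set H g"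
proof -
  assume g: "g \<in> units" and h: "g * y * ginv g \<in> H"
  have "y = ginv g * (g * y * ginv g) * g" using g by (simp add: usimps)
  then show ?thesis using h by (auto simp: conj_set_def)
qed

lemma E1:
  assumes g: "g \<in> units" and y: "y \<in> conj_set H g" and iy: "iota y \<in> conj_set H g"
  defines "\<gamma> \<equiv> w * iota g * ginv g"
  shows "g * y * ginv g \<in> H \<inter> conj_set H \<gamma> \<and>
         conj_char chi \<gamma> (g * y * ginv g) = inverse (chi (g * iota y * ginv g))"
proof -
  have ig: "iota g \<in> units" using g iota_units by blast
  have yu: "y \<in> units" using conjH_units g y by blast
  have h0: "g * y * ginv g \<in> H" using conjH_back g y by blast
  define h2 where "h2 = g * iota y * ginv g"
  have h2H: "h2 \<in> H" using conjH_back g iy by (simp add: h2_def)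
  have h2u: "h2 \<in> units" using h2H H_units by blast
  have "iota h2 \<in> conj_set H w" using iH h2H by blast
  then obtain h3 where h3: "h3 \<in> H" "iota h2 = ginv w * h3 * w" by (auto simp: conj_set_def)
  have h3u: "h3 \<in> units" using h3 H_units by blast
  have yeq: "y = ginv (iota g) * iota h2 * iota g"
  proof -
    have "iota y = ginv g * h2 * g" using g yu iota_units by (simp add: h2_def usimps)
    then have "iota (iota y) = iota (ginv g * h2 * g)" by simp
    then show ?thesis using g yu h2u ig
      by (simp add: iota_iota iota_mult iota_ginv usimps iota_units)
  qed
  have gu: "\<gamma> \<in> units" using w ig g by (simp add: \<gamma>_def usimps)
  have key: "\<gamma> * (g * y * ginv g) * ginv \<gamma> = h3"
    unfolding \<gamma>_def yeq h3(2) using w ig g h3u by (simp add: usimps)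
  have inconj: "g * y * ginv g \<in> conj_set H \<gamma>"
    using conjH_in[OF gu, of "g * y * ginv g"] key h3 by simp
  have "conj_char chi \<gamma> (g * y * ginv g) = chi h3" by (simp add: conj_char_def key)
  also have "\<dots> = inverse (chi (iota (iota h2)))"
  proof -
    have "iota h2 \<in> conj_set H w" by fact
    then have "inverse (chi (iota (iota h2))) = chi (w * iota h2 * ginv w)"
      using ichi by (simp add: conj_char_def)
    also have "w * iota h2 * ginv w = h3" using w h3u by (simp add: h3(2) usimps)
    finally show ?thesis by simp
  qed
  also have "\<dots> = inverse (chi h2)" using iota_iota h2u by simp
  finally show ?thesis using h0 inconj by (simp add: h2_def)
qed

lemma E2:
  assumes g: "g \<in> units" and h: "h \<in> H \<inter> conj_set H (w * iota g * ginv g)"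
  shows "ginv g * h * g \<in> conj_set H g \<and> iota (ginv g * h * g) \<in> conj_set H g"
proof -
  define \<gamma> where "\<gamma> = w * iota g * ginv g"
  have ig: "iota g \<in> units" using g iota_units by blast
  have gu: "\<gamma> \<in> units" using w ig g by (simp add: \<gamma>_def usimps)
  obtain h1 where h1: "h1 \<in> H" "h = ginv \<gamma> * h1 * \<gamma>" using h by (auto simp: conj_set_def \<gamma>_def)
  have h1u: "h1 \<in> units" using h1 H_units by blast
  have "ginv w * h1 * w \<in> iota ` H" using iH h1 by (auto simp: conj_set_def)
  then obtain h2 where h2: "h2 \<in> H" "ginv w * h1 * w = iota h2" by auto
  have h2u: "h2 \<in> units" using h2 H_units by blast
  have yeq: "ginv g * h * g = ginv (iota g) * (ginv w * h1 * w) * iota g"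
    unfolding h1(2) \<gamma>_def using w ig g h1u by (simp add: usimps)
  have "iota (ginv g * h * g) = ginv g * h2 * g"
    unfolding yeq h2(2) using ig h2u g w
    by (simp add: iota_mult iota_ginv iota_iota usimps iota_units)
  then show ?thesis using h h2 by (auto simp: conj_set_def)
qed

end

context full begin

lemma K_mult: "g \<in> units \<Longrightarrow> a \<in> conj_set H g \<Longrightarrow> c \<in> conj_set H g \<Longrightarrow> a * c \<in> conj_set H g"
proof -
  assume g: "g \<in> units" and a: "a \<in> conj_set H g" and c: "c \<in> conj_set H g"
  have "g * (a * c) * ginv g = (g * a * ginv g) * (g * c * ginv g)" using conj_mult[OF g] .
  then have "g * (a * c) * ginv g \<in> H" using conjH_back[OF g a] conjH_back[OF g c] H_mult by simp
  then show ?thesis using conjH_in[OF g] by blast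
qed

lemma K_ginv: "g \<in> units \<Longrightarrow> a \<in> conj_set H g \<Longrightarrow> ginv a \<in> conj_set H g"
proof -
  assume g: "g \<in> units" and a: "a \<in> conj_set H g"
  have "g * ginv a * ginv g = ginv (g * a * ginv g)" using conj_ginv[OF g conjH_units[OF g a]] .
  then have "g * ginv a * ginv g \<in> H" using conjH_back[OF g a] H_ginv by simp
  then show ?thesis using conjH_in[OF g] by blast
qed

lemma theta_mult: "g \<in> units \<Longrightarrow> a \<in> conj_set H g \<Longrightarrow> c \<in> conj_set H g \<Longrightarrow>
    conj_char chi g (a * c) = conj_char chi g a * conj_char chi g c"
proof -
  assume g: "g \<in> units" and a: "a \<in> conj_set H g" and c: "c \<in> conj_set H g"
  have "g * (a * c) * ginv g = (g * a * ginv g) * (g * c * ginv g)" using conj_mult[OF g] .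
  then show ?thesis unfolding conj_char_def using chi_mult conjH_back[OF g a] conjH_back[OF g c] by simp
qed

lemma main:
  assumes g: "g \<in> units"
  shows "(\<forall>x \<in> conj_set H g \<inter> fixed_points iota. conj_char chi g x = 1)
           \<longleftrightarrow> intertwines H chi (w * iota g * ginv g)"
proof
  assume T: "\<forall>x \<in> conj_set H g \<inter> fixed_points iota. conj_char chi g x = 1"
  show "intertwines H chi (w * iota g * ginv g)"
    unfolding intertwines_def
  proof
    fix h assume h: "h \<in> H \<inter> conj_set H (w * iota g * ginv g)"
    define y where "y = ginv g * h * g"
    have yK: "y \<in> conj_set H g" and iyK: "iota y \<in> conj_set H g" using E2[OF g h] by (auto simp: y_def)
    have hy: "g * y * ginv g = h" using g by (simp add: y_def usimps)
    have E: "conj_char chi (w * iota g * ginv g) h = inverse (chi (g * iota y * ginv g))"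
      using E1[OF g yK iyK] hy by simp
    have yu: "y \<in> units" using conjH_units g yK by blast
    have iyu: "iota y \<in> units" using conjH_units g iyK by blast
    define m where "m = ginv (iota y) * y"
    have mK: "m \<in> conj_set H g" using K_mult K_ginv g yK iyK by (simp add: m_def)
    have mH: "g * m * ginv g \<in> H" using conjH_back g mK by blast
    have mu: "m \<in> units" using conjH_units g mK by blast
    have meq: "ginv g * (g * m * ginv g) * g = m" using g by (simp add: usimps)
    have im: "iota m = ginv m"
      using yu iyu by (simp add: m_def iota_mult iota_ginv iota_iota ginv_mult ginv_units ginv_ginv)
    obtain t where tK: "t \<in> conj_set H g" and tt: "t * t = m" and it: "iota t = ginv t"
      using root_conj[OF mH g] meq im by auto
    have tu: "t \<in> units" using conjH_units g tK by blast
    define s where "s = y * ginv t"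
    have sK: "s \<in> conj_set H g" using K_mult K_ginv g yK tK by (simp add: s_def)
    have su: "s \<in> units" using conjH_units g sK by blast
    have "iota y * t * t = y" using tt iyu by (simp add: m_def usimps)
    then have "iota y * t * t * ginv t = y * ginv t" by simp
    then have "iota y * t = y * ginv t" using tu by (simp add: mult.assoc ginv_r)
    then have isg: "iota s = s" using yu tu by (simp add: s_def iota_mult iota_ginv ginv_units it ginv_ginv)
    have s1: "conj_char chi g s = 1" using T sK su isg by (simp add: fixed_points_def)
    have ys: "y = s * t" using tu by (simp add: s_def usimps)
    have iys: "iota y = s * ginv t" using ys su tu isg it by (simp add: iota_mult)
    have th: "conj_char chi g y * conj_char chi g (iota y) = 1"
    proof -
      have "conj_char chi g y * conj_char chi g (iota y)
          = (conj_char chi g s * conj_char chi g t) * (conj_char chi g s * conj_char chi g (ginv t))"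
        using ys iys theta_mult g sK tK K_ginv by simp
      also have "\<dots> = conj_char chi g t * conj_char chi g (ginv t)" using s1 by simp
      also have "\<dots> = conj_char chi g (t * ginv t)" using theta_mult g tK K_ginv by simp
      also have "\<dots> = 1" using tu g by (simp add: ginv_r conj_char_def chi_one)
      finally show ?thesis .
    qed
    have nz: "conj_char chi g (iota y) \<noteq> 0" using chi_nz conjH_back g iyK by (simp add: conj_char_def)
    have "chi h = conj_char chi g y" using hy by (simp add: conj_char_def)
    also have "\<dots> = inverse (conj_char chi g (iota y))" using th nz by (simp add: field_simps)
    also have "\<dots> = conj_char chi (w * iota g * ginv g) h" using E by (simp add: conj_char_def)
    finally show "chi h = conj_char chi (w * iota g * ginv g) h" .
  qed
next
  assume I: "intertwines H chi (w * iota g * ginv g)"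
  show "\<forall>x \<in> conj_set H g \<inter> fixed_points iota. conj_char chi g x = 1"
  proof
    fix x assume x: "x \<in> conj_set H g \<inter> fixed_points iota"
    then have xK: "x \<in> conj_set H g" and ix: "iota x = x" by (auto simp: fixed_points_def)
    have xH: "g * x * ginv g \<in> H" using conjH_back g xK by blast
    have xeq: "ginv g * (g * x * ginv g) * g = x" using g by (simp add: usimps)
    obtain t where tK: "t \<in> conj_set H g" and tt: "t * t = x" and it: "iota t = t"
      using root_conj[OF xH g] xeq ix by auto
    have E: "g * t * ginv g \<in> H \<inter> conj_set H (w * iota g * ginv g) \<and>
         conj_char chi (w * iota g * ginv g) (g * t * ginv g) = inverse (chi (g * iota t * ginv g))"
      using E1[OF g tK] it tK by simp
    then have hin: "g * t * ginv g \<in> H \<inter> conj_set H (w * iota g * ginv g)"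
      and heq: "conj_char chi (w * iota g * ginv g) (g * t * ginv g) = inverse (chi (g * t * ginv g))"
      using it by auto
    have "chi (g * t * ginv g) = conj_char chi (w * iota g * ginv g) (g * t * ginv g)"
      using I hin unfolding intertwines_def by blast
    then have "chi (g * t * ginv g) = inverse (chi (g * t * ginv g))" using heq by simp
    then have "conj_char chi g t * conj_char chi g t = 1"
    proof -
      have "chi (g * t * ginv g) \<noteq> 0" using chi_nz conjH_back g tK by blast
      then show ?thesis using \<open>chi (g * t * ginv g) = inverse (chi (g * t * ginv g))\<close>
        unfolding conj_char_def by (metis right_inverse)
    qed
    then show "conj_char chi g x = 1" using theta_mult[OF g tK tK] tt by simp
  qed
qed

end

theorem lemma6p2:
  fixes v :: "'f::field \<Rightarrow> real" and p :: nat
    and e :: "'f \<Rightarrow> 'a::ring_1" and n :: nat and b :: "nat \<Rightarrow> 'a"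
    and iota :: "'a \<Rightarrow> 'a" and H :: "'a set" and chi :: "'a \<Rightarrow> complex" and w :: "'a"
  assumes F: "nonarch_local_field v p" and p_odd: "odd p"
    and A: "central_simple_algebra e n b"
    and inv: "continuous_involution (G_top v e n b) iota"
    and H_prop: "pro_p_group (G_top v e n b) p H"
    and H_open: "openin (G_top v e n b) H"
    and chi: "character (G_top v e n b) H chi"
    and w: "w \<in> units"
    and iH: "iota ` H = conj_set H w"
    and ichi: "\<forall>x \<in> conj_set H w. inverse (chi (iota x)) = conj_char chi w x"
  shows "\<forall>g \<in> units.
           (\<forall>x \<in> conj_set H g \<inter> fixed_points iota. conj_char chi g x = 1)
           \<longleftrightarrow> intertwines H chi (w * iota g * ginv g)"
proof -
  have av: "abs_val v" and ul: "\<And>x y. v (x + y) \<le> max (v x) (v y)"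
    using F unfolding nonarch_local_field_def by blast+
  interpret full v e n b p iota H chi w
    by (unfold_locales) (rule av ul A p_odd inv H_prop chi w iH ichi)+
  show ?thesis using main by blast
qed


end
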